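(* Let $Q_k$ be a $K$-subset system. For every non-limit ordinal $\alpha$, every $\alpha^k$-special $T_0$ space is irreducible.
   Context: For a $K$-subset system $Q_k$ (an assignment $X\mapsto Q_k(X)$ with $\{\uparrow x\}\subseteq Q_k(X)\subseteq Q(X)$, the nonempty compact saturated sets, such that continuous images of $k$-Rudin sets are $k$-Rudin), a nonempty $A\subseteq X$ is $k$-Rudin if for some filtered $\mathcal K\subseteq Q_k(X)$, $\overline A$ is a minimal closed set meeting every member of $\mathcal K$. $K(X)$ is the set of classes of $k$-Rudin sets under $A\sim B\iff\overline A=\overline B$, with open sets $U^*=\{[A]\mid A\cap U\ne\emptyset\}$; $X$ embeds via $x\mapsto[\{x\}]$. $K_0(X)=X$, $K_{\beta+1}(X)=K(K_\beta(X))$, $K_\beta(X)=\bigcup_{\gamma<\beta}K_\gamma(X)$ for limit $\beta$. $\mathrm{rank}_k(X)$ is the least $\alpha$ with $K_\alpha(X)\cong K_{\alpha+1}(X)$. $X$ is $\alpha^k$-special if $\mathrm{rank}_k(X)=\alpha$ and $\alpha$ is the least ordinal for which $K_\alpha(X)$ has a greatest element in its specialization order. A space is irreducible if it is nonempty and not the union of two proper closed subsets. *)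

theory Defs
  imports "HOL-Analysis.Analysis"
begin

definition spec_le :: "'b topology \<Rightarrow> 'b \<Rightarrow> 'b \<Rightarrow> bool" where
  "spec_le Y x y \<longleftrightarrow> x \<in> Y closure_of {y}"

definition upset :: "'b topology \<Rightarrow> 'b \<Rightarrow> 'b set" where
  "upset Y x = {y \<in> topspace Y. spec_le Y x y}"

definition saturatedin :: "'b topology \<Rightarrow> 'b set \<Rightarrow> bool" where
  "saturatedin Y K \<longleftrightarrow> K \<subseteq> topspace Y \<and>
     K = topspace Y \<inter> \<Inter>{U. openin Y U \<and> K \<subseteq> U}"

definition Qsets :: "'b topology \<Rightarrow> 'b set set" where
  "Qsets Y = {K. K \<noteq> {} \<and> compactin Y K \<and> saturatedin Y K}"

definition filtered :: "'b set set \<Rightarrow> bool" where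
  "filtered \<K> \<longleftrightarrow> \<K> \<noteq> {} \<and>
     (\<forall>K1\<in>\<K>. \<forall>K2\<in>\<K>. \<exists>K3\<in>\<K>. K3 \<subseteq> K1 \<inter> K2)"

definition min_closed_meeting :: "'b topology \<Rightarrow> 'b set set \<Rightarrow> 'b set \<Rightarrow> bool" where
  "min_closed_meeting Y \<K> C \<longleftrightarrow> closedin Y C \<and> (\<forall>K\<in>\<K>. C \<inter> K \<noteq> {}) \<and>
     (\<forall>C'. closedin Y C' \<and> C' \<subseteq> C \<and> (\<forall>K\<in>\<K>. C' \<inter> K \<noteq> {}) \<longrightarrow> C' = C)"

definition kRudin :: "('b topology \<Rightarrow> 'b set set) \<Rightarrow> 'b topology \<Rightarrow> 'b set \<Rightarrow> bool" where
  "kRudin Qk Y A \<longleftrightarrow> A \<noteq> {} \<and> A \<subseteq> topspace Y \<and>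
     (\<exists>\<K>. \<K> \<subseteq> Qk Y \<and> filtered \<K> \<and> min_closed_meeting Y \<K> (Y closure_of A))"

text \<open>K-subset system (on all spaces whose carrier type is 'b).\<close>
definition K_subset_system :: "('b topology \<Rightarrow> 'b set set) \<Rightarrow> bool" where
  "K_subset_system Qk \<longleftrightarrow>
     (\<forall>Y. {upset Y x | x. x \<in> topspace Y} \<subseteq> Qk Y \<and> Qk Y \<subseteq> Qsets Y) \<and>
     (\<forall>(Y::'b topology) (Z::'b topology) f A.
        continuous_map Y Z f \<and> kRudin Qk Y A \<longrightarrow> kRudin Qk Z (f ` A))"

text \<open>The class [A] of a k-Rudin set A is represented by its canonical
  representative data, the closure of A (A ~ B iff cl A = cl B).
  Open sets: U* = {[A] | A meets U}.\<close>
definition Kpoints :: "('b topology \<Rightarrow> 'b set set) \<Rightarrow> 'b topology \<Rightarrow> 'b set set" where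
  "Kpoints Qk Y = {Y closure_of A | A. kRudin Qk Y A}"

definition Kspace :: "('b topology \<Rightarrow> 'b set set) \<Rightarrow> 'b topology \<Rightarrow> 'b set topology" where
  "Kspace Qk Y = topology_generated_by
     {{C \<in> Kpoints Qk Y. C \<inter> U \<noteq> {}} | U. openin Y U}"

definition rep_space :: "'a topology \<Rightarrow> 'a set set \<Rightarrow> 'a set topology" where
  "rep_space X S = topology_generated_by {{F \<in> S. F \<inter> U \<noteq> {}} | U. openin X U}"

text \<open>Ordinals are elements of an arbitrary well-ordered type 'o.\<close>
definition is_succ :: "'o::wellorder \<Rightarrow> 'o \<Rightarrow> bool" where
  "is_succ \<beta> \<gamma> \<longleftrightarrow> \<beta> < \<gamma> \<and> \<not> (\<exists>\<delta>. \<beta> < \<delta> \<and> \<delta> < \<gamma>)"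

definition osucc :: "'o::wellorder \<Rightarrow> 'o" where
  "osucc \<beta> = (LEAST \<gamma>. \<beta> < \<gamma>)"

definition is_zero :: "'o::wellorder \<Rightarrow> bool" where
  "is_zero \<gamma> \<longleftrightarrow> (\<forall>\<delta>. \<gamma> \<le> \<delta>)"

definition non_limit :: "'o::wellorder \<Rightarrow> bool" where
  "non_limit \<alpha> \<longleftrightarrow> is_zero \<alpha> \<or> (\<exists>\<beta>. is_succ \<beta> \<alpha>)"

text \<open>Carrier of K_gamma(X): K_0 = {cl{x}}, K_(b+1) = K(K_b) (flattened back to
  closed sets of X via C \<mapsto> cl_X (\<Union>C)), limits = unions.\<close>
definition Kset :: "('a set topology \<Rightarrow> 'a set set set) \<Rightarrow> 'a topology \<Rightarrow> 'o::wellorder \<Rightarrow> 'a set set" where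
  "Kset Qk X = wfrec {(x, y). x < y} (\<lambda>f \<gamma>.
     if is_zero \<gamma> then {X closure_of {x} | x. x \<in> topspace X}
     else if (\<exists>\<beta>. is_succ \<beta> \<gamma>) then
       (\<lambda>C. X closure_of (\<Union>C)) ` topspace (Kspace Qk (rep_space X (f (THE \<beta>. is_succ \<beta> \<gamma>))))
     else \<Union>{f \<beta> | \<beta>. \<beta> < \<gamma>})"

definition Ktower :: "('a set topology \<Rightarrow> 'a set set set) \<Rightarrow> 'a topology \<Rightarrow> 'o::wellorder \<Rightarrow> 'a set topology" where
  "Ktower Qk X \<gamma> = rep_space X (Kset Qk X \<gamma>)"

definition has_greatest :: "'b topology \<Rightarrow> bool" where
  "has_greatest Y \<longleftrightarrow> (\<exists>p\<in>topspace Y. \<forall>q\<in>topspace Y. spec_le Y q p)"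

text \<open>rank_k(X) = alpha (alpha must have a successor in 'o).\<close>
definition has_rank :: "('a set topology \<Rightarrow> 'a set set set) \<Rightarrow> 'a topology \<Rightarrow> 'o::wellorder \<Rightarrow> bool" where
  "has_rank Qk X \<alpha> \<longleftrightarrow> (\<exists>\<gamma>. \<alpha> < \<gamma>) \<and>
     Ktower Qk X \<alpha> homeomorphic_space Ktower Qk X (osucc \<alpha>) \<and>
     (\<forall>\<beta><\<alpha>. \<not> (Ktower Qk X \<beta> homeomorphic_space Ktower Qk X (osucc \<beta>)))"

definition special :: "('a set topology \<Rightarrow> 'a set set set) \<Rightarrow> 'a topology \<Rightarrow> 'o::wellorder \<Rightarrow> bool" where
  "special Qk X \<alpha> \<longleftrightarrow> has_rank Qk X \<alpha> \<and> has_greatest (Ktower Qk X \<alpha>) \<and>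
     (\<forall>\<beta><\<alpha>. \<not> has_greatest (Ktower Qk X \<beta>))"

definition irreducible_space :: "'b topology \<Rightarrow> bool" where
  "irreducible_space Y \<longleftrightarrow> topspace Y \<noteq> {} \<and>
     \<not> (\<exists>A B. closedin Y A \<and> closedin Y B \<and> A \<noteq> topspace Y \<and> B \<noteq> topspace Y \<and>
            A \<union> B = topspace Y)"

end

theory Submission
  imports Defs
begin

definition irr_set :: "'a topology \<Rightarrow> 'a set \<Rightarrow> bool" where
  "irr_set X F \<longleftrightarrow> (\<forall>F1 F2. closedin X F1 \<and> closedin X F2 \<and> F \<subseteq> F1 \<union> F2 \<longrightarrow> F \<subseteq> F1 \<or> F \<subseteq> F2)"

lemma is_succ_unique: "is_succ b (g::'o::wellorder) \<Longrightarrow> is_succ b' g \<Longrightarrow> b = b'"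
  unfolding is_succ_def by (metis linorder_neqE)

lemma Kset_eq:
  "Kset Qk X (\<gamma>::'o::wellorder) =
     (if is_zero \<gamma> then {X closure_of {x} | x. x \<in> topspace X}
     else if (\<exists>\<beta>. is_succ \<beta> \<gamma>) then
       (\<lambda>C. X closure_of (\<Union>C)) ` topspace (Kspace Qk (rep_space X (Kset Qk X (THE \<beta>. is_succ \<beta> \<gamma>))))
     else \<Union>{Kset Qk X \<beta> | \<beta>. \<beta> < \<gamma>})"
proof -
  let ?F = "(\<lambda>f \<gamma>.
     if is_zero \<gamma> then {X closure_of {x} | x. x \<in> topspace X}
     else if (\<exists>\<beta>. is_succ \<beta> \<gamma>) then
       (\<lambda>C. X closure_of (\<Union>C)) ` topspace (Kspace Qk (rep_space X (f (THE \<beta>. is_succ \<beta> \<gamma>))))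
     else \<Union>{f \<beta> | \<beta>. (\<beta>::'o) < \<gamma>})"
  have adm: "adm_wf {(x, y). x < y} ?F"
    unfolding adm_wf_def
  proof (intro allI impI)
    fix f g :: "'o \<Rightarrow> 'a set set" and x :: 'o
    assume h: "\<forall>z. (z, x) \<in> {(x, y). x < y} \<longrightarrow> f z = g z"
    show "?F f x = ?F g x"
    proof (cases "\<exists>\<beta>. is_succ \<beta> x")
      case True
      then obtain b where b: "is_succ b x" by blast
      then have "(THE \<beta>. is_succ \<beta> x) = b" using is_succ_unique by blast
      moreover have "b < x" using b is_succ_def by blast
      ultimately show ?thesis using h True by simp
    next
      case False
      have "{f \<beta> | \<beta>. \<beta> < x} = {g \<beta> | \<beta>. \<beta> < x}" using h by auto
      then show ?thesis using False by simp
    qed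
  qed
  have "Kset Qk X = ?F (Kset Qk X)"
    unfolding Kset_def by (rule wfrec_fixpoint[OF wf adm])
  then have "Kset Qk X \<gamma> = ?F (Kset Qk X) \<gamma>" by (rule fun_cong)
  then show ?thesis by simp
qed

lemma rep_open: "openin X U \<Longrightarrow> openin (rep_space X S) {F\<in>S. F \<inter> U \<noteq> {}}"
  unfolding rep_space_def by (rule topology_generated_by_Basis) blast

lemma rep_topspace: "topspace (rep_space X S) = {F\<in>S. F \<inter> topspace X \<noteq> {}}"
  unfolding rep_space_def topology_generated_by_topspace
  by (auto dest: openin_subset)

lemma rep_closed:
  assumes "\<forall>F\<in>S. F \<subseteq> topspace X" "closedin X G"
  shows "closedin (rep_space X S) {F\<in>topspace (rep_space X S). F \<subseteq> G}"
proof -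
  have "topspace (rep_space X S) - {F\<in>topspace (rep_space X S). F \<subseteq> G}
        = {F\<in>S. F \<inter> (topspace X - G) \<noteq> {}}"
    using assms(1) by (auto simp: rep_topspace)
  moreover have "openin X (topspace X - G)" using assms(2) by blast
  ultimately show ?thesis unfolding closedin_def using rep_open by fastforce
qed

lemma Kspace_topspace: "topspace (Kspace Qk Y) = {C\<in>Kpoints Qk Y. C \<inter> topspace Y \<noteq> {}}"
  unfolding Kspace_def topology_generated_by_topspace
  by (auto dest: openin_subset)

lemma succ_irr:
  assumes S: "\<forall>F\<in>S. closedin X F \<and> irr_set X F"
    and C: "C \<in> topspace (Kspace Qk (rep_space X S))"
  shows "irr_set X (X closure_of (\<Union>C))"
  unfolding irr_set_def
proof (intro allI impI)
  fix F1 F2 assume h: "closedin X F1 \<and> closedin X F2 \<and> X closure_of \<Union>C \<subseteq> F1 \<union> F2"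
  define Y where "Y = rep_space X S"
  have Ssub: "\<forall>F\<in>S. F \<subseteq> topspace X" using S closedin_subset by blast
  from C have "C \<in> Kpoints Qk Y" unfolding Y_def Kspace_topspace by blast
  then obtain A where A: "C = Y closure_of A" "kRudin Qk Y A" unfolding Kpoints_def by blast
  then obtain K where K: "K \<subseteq> Qk Y" "filtered K" "min_closed_meeting Y K C"
    unfolding kRudin_def by blast
  have Ctop: "C \<subseteq> topspace Y" using A(1) by (simp add: closure_of_subset_topspace)
  have CS: "C \<subseteq> S" using Ctop unfolding Y_def rep_topspace by blast
  define D1 where "D1 = {F\<in>topspace Y. F \<subseteq> F1}"
  define D2 where "D2 = {F\<in>topspace Y. F \<subseteq> F2}"
  have cD1: "closedin Y D1" unfolding D1_def Y_def using rep_closed Ssub h by blast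
  have cD2: "closedin Y D2" unfolding D2_def Y_def using rep_closed Ssub h by blast
  have cC: "closedin Y C" using A(1) by simp
  have sub: "\<Union>C \<subseteq> X closure_of \<Union>C"
    by (rule closure_of_subset) (use CS Ssub in blast)
  have CD: "C \<subseteq> D1 \<union> D2"
  proof
    fix F assume F: "F \<in> C"
    then have "F \<subseteq> F1 \<union> F2" using sub h by blast
    then have "F \<subseteq> F1 \<or> F \<subseteq> F2" using S F CS h unfolding irr_set_def by blast
    then show "F \<in> D1 \<union> D2" using F Ctop unfolding D1_def D2_def by blast
  qed
  have "(\<forall>k\<in>K. (C \<inter> D1) \<inter> k \<noteq> {}) \<or> (\<forall>k\<in>K. (C \<inter> D2) \<inter> k \<noteq> {})"
  proof (rule ccontr)
    assume "\<not> ?thesis"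
    then obtain k1 k2 where k: "k1 \<in> K" "k2 \<in> K" "(C \<inter> D1) \<inter> k1 = {}" "(C \<inter> D2) \<inter> k2 = {}" by blast
    then obtain k3 where k3: "k3 \<in> K" "k3 \<subseteq> k1 \<inter> k2" using K(2) unfolding filtered_def by blast
    then have "C \<inter> k3 \<noteq> {}" using K(3) unfolding min_closed_meeting_def by blast
    then show False using k k3 CD by blast
  qed
  then have "C \<inter> D1 = C \<or> C \<inter> D2 = C"
    using K(3) cC cD1 cD2 unfolding min_closed_meeting_def
    by (metis closedin_Int inf_le1)
  then have "\<Union>C \<subseteq> F1 \<or> \<Union>C \<subseteq> F2" unfolding D1_def D2_def by blast
  then show "X closure_of \<Union>C \<subseteq> F1 \<or> X closure_of \<Union>C \<subseteq> F2"
    using h closure_of_minimal by metis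
qed

lemma succ_cover:
  assumes Q: "K_subset_system Qk"
    and S: "\<forall>F\<in>S. closedin X F"
    and F: "F \<in> S" "x \<in> F"
  shows "\<exists>C\<in>topspace (Kspace Qk (rep_space X S)). x \<in> X closure_of (\<Union>C)"
proof -
  define Y where "Y = rep_space X S"
  have Ssub: "\<forall>F\<in>S. F \<subseteq> topspace X" using S closedin_subset by blast
  have FY: "F \<in> topspace Y" unfolding Y_def rep_topspace using F Ssub by blast
  have "\<forall>Y. {upset Y x | x. x \<in> topspace Y} \<subseteq> Qk Y \<and> Qk Y \<subseteq> Qsets Y"
    using Q unfolding K_subset_system_def by (rule conjunct1)
  then have "{upset Y x | x. x \<in> topspace Y} \<subseteq> Qk Y" by (simp only: spec[of _ Y])
  moreover have "upset Y F \<in> {upset Y x | x. x \<in> topspace Y}" using FY by blast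
  ultimately have up: "upset Y F \<in> Qk Y" by (rule subsetD)
  have "{F} \<subseteq> Y closure_of {F}" using FY by (intro closure_of_subset) simp
  then have FF: "F \<in> Y closure_of {F}" by simp
  have Fup: "F \<in> upset Y F" using FY FF unfolding upset_def spec_le_def by blast
  have mcm: "min_closed_meeting Y {upset Y F} (Y closure_of {F})"
    unfolding min_closed_meeting_def
  proof (intro conjI allI impI)
    show "closedin Y (Y closure_of {F})" by simp
    show "\<forall>K\<in>{upset Y F}. Y closure_of {F} \<inter> K \<noteq> {}" using FF Fup by blast
  next
    fix C' assume h: "closedin Y C' \<and> C' \<subseteq> Y closure_of {F} \<and> (\<forall>K\<in>{upset Y F}. C' \<inter> K \<noteq> {})"
    then obtain G where G: "G \<in> C'" "G \<in> upset Y F" by blast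
    then have "F \<in> Y closure_of {G}" unfolding upset_def spec_le_def by blast
    moreover have "Y closure_of {G} \<subseteq> C'" using G h by (intro closure_of_minimal) auto
    ultimately have "Y closure_of {F} \<subseteq> C'" using h by (intro closure_of_minimal) auto
    then show "C' = Y closure_of {F}" using h by blast
  qed
  have fil: "filtered {upset Y F}" unfolding filtered_def by simp
  have kr: "kRudin Qk Y {F}" unfolding kRudin_def
    by (rule conjI, simp, rule conjI, use FY in simp, rule exI[of _ "{upset Y F}"]) (use up fil mcm in simp)
  define C where "C = Y closure_of {F}"
  have "C \<in> Kpoints Qk Y" unfolding Kpoints_def C_def using kr by auto
  moreover have "F \<in> C \<inter> topspace Y" using FF FY C_def by blast
  ultimately have C1: "C \<in> topspace (Kspace Qk Y)" unfolding Kspace_topspace by blast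
  have "C \<subseteq> topspace Y" unfolding C_def by (rule closure_of_subset_topspace)
  then have "C \<subseteq> S" unfolding Y_def rep_topspace by blast
  then have "\<Union>C \<subseteq> topspace X" using Ssub by blast
  then have "\<Union>C \<subseteq> X closure_of \<Union>C" by (rule closure_of_subset)
  moreover have "x \<in> \<Union>C" using F FF C_def by blast
  ultimately have "x \<in> X closure_of \<Union>C" by blast
  with C1 show ?thesis unfolding Y_def by blast
qed

lemma Kset_inv:
  assumes Q: "K_subset_system Qk"
  shows "(\<forall>F\<in>Kset Qk X (\<gamma>::'o::wellorder). closedin X F \<and> irr_set X F) \<and>
         (\<forall>x\<in>topspace X. \<exists>F\<in>Kset Qk X \<gamma>. x \<in> F)"
proof (induction \<gamma> rule: less_induct)
  case (less \<gamma>)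
  show ?case
  proof (cases "is_zero \<gamma>")
    case True
    have irr: "irr_set X (X closure_of {x})" if x: "x \<in> topspace X" for x
      unfolding irr_set_def
    proof (intro allI impI)
      fix F1 F2 assume h: "closedin X F1 \<and> closedin X F2 \<and> X closure_of {x} \<subseteq> F1 \<union> F2"
      have "{x} \<subseteq> X closure_of {x}" using x by (intro closure_of_subset) simp
      then have "x \<in> F1 \<or> x \<in> F2" using h by blast
      then show "X closure_of {x} \<subseteq> F1 \<or> X closure_of {x} \<subseteq> F2"
      proof
        assume "x \<in> F1" then have "X closure_of {x} \<subseteq> F1" using h by (intro closure_of_minimal) auto
        then show ?thesis ..
      next
        assume "x \<in> F2" then have "X closure_of {x} \<subseteq> F2" using h by (intro closure_of_minimal) auto
        then show ?thesis ..
      qed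
    qed
    have mem: "x \<in> X closure_of {x}" if "x \<in> topspace X" for x
    proof -
      have "{x} \<subseteq> X closure_of {x}" using that by (intro closure_of_subset) simp
      then show ?thesis by simp
    qed
    have eq: "Kset Qk X \<gamma> = {X closure_of {x} | x. x \<in> topspace X}"
      using True by (subst Kset_eq, simp)
    have A: "\<forall>F\<in>Kset Qk X \<gamma>. closedin X F \<and> irr_set X F"
    proof
      fix F assume "F \<in> Kset Qk X \<gamma>"
      then obtain x where "F = X closure_of {x}" "x \<in> topspace X" unfolding eq by blast
      then show "closedin X F \<and> irr_set X F" using irr by simp
    qed
    have B: "\<forall>x\<in>topspace X. \<exists>F\<in>Kset Qk X \<gamma>. x \<in> F"
    proof
      fix x assume x: "x \<in> topspace X"
      have "X closure_of {x} \<in> Kset Qk X \<gamma>" unfolding eq using x by blast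
      then show "\<exists>F\<in>Kset Qk X \<gamma>. x \<in> F" using mem[OF x] by blast
    qed
    show ?thesis using A B by (rule conjI)
  next
    case nz: False
    show ?thesis
    proof (cases "\<exists>\<beta>. is_succ \<beta> \<gamma>")
      case True
      then obtain b where b: "is_succ b \<gamma>" by blast
      then have tb: "(THE \<beta>. is_succ \<beta> \<gamma>) = b" using is_succ_unique by blast
      have blt: "b < \<gamma>" using b unfolding is_succ_def by (rule conjunct1)
      have eq: "Kset Qk X \<gamma> = (\<lambda>C. X closure_of (\<Union>C)) ` topspace (Kspace Qk (rep_space X (Kset Qk X b)))"
        using nz True tb by (subst Kset_eq, simp)
      have IHb: "(\<forall>F\<in>Kset Qk X b. closedin X F \<and> irr_set X F) \<and> (\<forall>x\<in>topspace X. \<exists>F\<in>Kset Qk X b. x \<in> F)"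
        by (rule less.IH[OF blt])
      then have IH1: "\<forall>F\<in>Kset Qk X b. closedin X F \<and> irr_set X F"
        and IH2: "\<forall>x\<in>topspace X. \<exists>F\<in>Kset Qk X b. x \<in> F" by simp_all
      have IH1': "\<forall>F\<in>Kset Qk X b. closedin X F" using IH1 by simp
      have A: "\<forall>F\<in>Kset Qk X \<gamma>. closedin X F \<and> irr_set X F"
      proof
        fix F assume "F \<in> Kset Qk X \<gamma>"
        then obtain C where C: "C \<in> topspace (Kspace Qk (rep_space X (Kset Qk X b)))" "F = X closure_of (\<Union>C)"
          unfolding eq by blast
        show "closedin X F \<and> irr_set X F" using succ_irr[OF IH1 C(1)] C(2) by simp
      qed
      have B: "\<forall>x\<in>topspace X. \<exists>F\<in>Kset Qk X \<gamma>. x \<in> F"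
      proof
        fix x assume "x \<in> topspace X"
        then obtain F where F: "F \<in> Kset Qk X b" "x \<in> F" using IH2 by blast
        obtain C where C: "C\<in>topspace (Kspace Qk (rep_space X (Kset Qk X b)))" "x \<in> X closure_of (\<Union>C)"
          using succ_cover[OF Q IH1' F] by blast
        have "X closure_of (\<Union>C) \<in> Kset Qk X \<gamma>" unfolding eq using C(1) by (rule imageI)
        then show "\<exists>F\<in>Kset Qk X \<gamma>. x \<in> F" using C(2) by blast
      qed
      show ?thesis using A B by (rule conjI)
    next
      case ns: False
      have eq: "Kset Qk X \<gamma> = \<Union>{Kset Qk X \<beta> | \<beta>. \<beta> < \<gamma>}"
        using nz ns by (subst Kset_eq, simp)
      obtain d where d: "d < \<gamma>" using nz unfolding is_zero_def using not_le by blast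
      have A: "\<forall>F\<in>Kset Qk X \<gamma>. closedin X F \<and> irr_set X F"
      proof
        fix F assume "F \<in> Kset Qk X \<gamma>"
        then obtain b where b: "b < \<gamma>" "F \<in> Kset Qk X b" unfolding eq by blast
        have "\<forall>F\<in>Kset Qk X b. closedin X F \<and> irr_set X F" using less.IH[OF b(1)] by (rule conjunct1)
        then show "closedin X F \<and> irr_set X F" using b(2) by blast
      qed
      have B: "\<forall>x\<in>topspace X. \<exists>F\<in>Kset Qk X \<gamma>. x \<in> F"
      proof
        fix x assume x: "x \<in> topspace X"
        have "\<forall>x\<in>topspace X. \<exists>F\<in>Kset Qk X d. x \<in> F" using less.IH[OF d] by (rule conjunct2)
        then obtain F where F: "F \<in> Kset Qk X d" "x \<in> F" using x by blast
        have "F \<in> Kset Qk X \<gamma>" unfolding eq using d F(1) by blast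
        then show "\<exists>F\<in>Kset Qk X \<gamma>. x \<in> F" using F(2) by blast
      qed
      show ?thesis using A B by (rule conjI)
    qed
  qed
qed

theorem mainTheorem8:
  fixes Qk :: "'a set topology \<Rightarrow> 'a set set set"
    and X :: "'a topology"
    and \<alpha> :: "'o::wellorder"
  assumes "K_subset_system Qk"
    and "non_limit \<alpha>"
    and "special Qk X \<alpha>"
    and "t0_space X"
  shows "irreducible_space X"
proof -
  define S where "S = Kset Qk X \<alpha>"
  have invb: "(\<forall>F\<in>S. closedin X F \<and> irr_set X F) \<and> (\<forall>x\<in>topspace X. \<exists>F\<in>S. x \<in> F)"
    unfolding S_def by (rule Kset_inv[OF assms(1)])
  then have inv1: "\<forall>F\<in>S. closedin X F \<and> irr_set X F" and inv2: "\<forall>x\<in>topspace X. \<exists>F\<in>S. x \<in> F"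
    by simp_all
  have "has_greatest (Ktower Qk X \<alpha>)" using assms(3) unfolding special_def by simp
  then have "has_greatest (rep_space X S)" unfolding Ktower_def S_def .
  then obtain p where p: "p \<in> topspace (rep_space X S)"
    and gr: "\<forall>q\<in>topspace (rep_space X S). spec_le (rep_space X S) q p"
    unfolding has_greatest_def by blast
  have pS: "p \<in> S" "p \<inter> topspace X \<noteq> {}" using p unfolding rep_topspace by simp_all
  have pcl: "closedin X p" using inv1 pS(1) by simp
  have qp: "q \<subseteq> p" if q: "q \<in> topspace (rep_space X S)" for q
  proof (rule ccontr)
    assume "\<not> q \<subseteq> p"
    then obtain x where x: "x \<in> q" "x \<notin> p" by blast
    have qS: "q \<in> S" using q unfolding rep_topspace by simp
    then have "closedin X q" using inv1 by simp
    then have "q \<subseteq> topspace X" by (rule closedin_subset)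
    then have xX: "x \<in> topspace X" using x by blast
    define U where "U = topspace X - p"
    have oU: "openin X U" unfolding U_def using pcl by (simp add: openin_diff)
    define T where "T = {F\<in>S. F \<inter> U \<noteq> {}}"
    have xU: "x \<in> U" using x xX unfolding U_def by simp
    have qT: "q \<in> T" unfolding T_def using qS x xU by blast
    have pT: "p \<notin> T" unfolding T_def U_def by blast
    have oT: "openin (rep_space X S) T" unfolding T_def by (rule rep_open[OF oU])
    have "spec_le (rep_space X S) q p" using gr q by simp
    then have "q \<in> rep_space X S closure_of {p}" unfolding spec_le_def .
    then have "\<forall>T. q \<in> T \<and> openin (rep_space X S) T \<longrightarrow> (\<exists>y. y \<in> {p} \<and> y \<in> T)"
      unfolding in_closure_of by (rule conjunct2)
    then have "\<exists>y. y \<in> {p} \<and> y \<in> T" using qT oT by simp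
    then show False using pT by simp
  qed
  have psub: "p \<subseteq> topspace X" using pcl by (rule closedin_subset)
  have "topspace X \<subseteq> p"
  proof
    fix x assume x: "x \<in> topspace X"
    then obtain F where F: "F \<in> S" "x \<in> F" using inv2 by blast
    then have "F \<in> topspace (rep_space X S)" using x unfolding rep_topspace by blast
    then have "F \<subseteq> p" by (rule qp)
    then show "x \<in> p" using F(2) by blast
  qed
  then have pX: "p = topspace X" using psub by blast
  have pirr: "irr_set X p" using inv1 pS(1) by simp
  show ?thesis unfolding irreducible_space_def
  proof
    show "topspace X \<noteq> {}" using pS(2) by blast
    show "\<not> (\<exists>A B. closedin X A \<and> closedin X B \<and> A \<noteq> topspace X \<and> B \<noteq> topspace X \<and> A \<union> B = topspace X)"
    proof
      assume "\<exists>A B. closedin X A \<and> closedin X B \<and> A \<noteq> topspace X \<and> B \<noteq> topspace X \<and> A \<union> B = topspace X"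
      then obtain A B where h: "closedin X A" "closedin X B" "A \<noteq> topspace X" "B \<noteq> topspace X" "A \<union> B = topspace X" by blast
      have "p \<subseteq> A \<union> B" using h(5) pX by simp
      then have "p \<subseteq> A \<or> p \<subseteq> B" using pirr h(1,2) unfolding irr_set_def by blast
      moreover have "A \<subseteq> topspace X" using h(1) by (rule closedin_subset)
      moreover have "B \<subseteq> topspace X" using h(2) by (rule closedin_subset)
      ultimately show False using h(3,4) pX by blast
    qed
  qed
qed

end
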